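(* Let $\mu\in L^\infty(\Omega_T\times]0,1[)$ be an entropy process solution, $C:=\|\mu\|_{L^\infty(\Omega_T\times]0,1[)}$, and $k\in\mathbb{R}$. Then for each choice of sign $\pm$ and every $\varphi\ge 0$ smooth on $\overline\Omega\times[0,T[$ with compact support in $\overline\Omega\times[0,T[$, $$\int_0^T\int_\Omega\int_0^1\eta_k^\pm(\mu)\partial_t\varphi+q_k^\pm(\mu)\partial_x\varphi\,d\alpha\,dx\,dt-\int_0^T\int_\Omega\int_0^1\mathrm{sign}^\pm(\mu-k)z'(x)b(\mu)\varphi\,d\alpha\,dx\,dt+\int_\Omega\eta_k^\pm(u_0(x))\varphi(x,0)dx+\mathrm{Lip}_{[-C,C]}(f)\int_0^T\eta_k^\pm(u_r(t))\varphi(x_r,t)+\eta_k^\pm(u_l(t))\varphi(x_l,t)\,dt\ge0.$$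
   Context: Let $x_l<x_r$, $\Omega=]x_l,x_r[$, $T>0$, $\Omega_T=\Omega\times]0,T[$. Data: $u_0\in L^\infty(\Omega)$, $u_l,u_r\in L^\infty(]0,T[)$, $f\in C^2(\mathbb{R})$, $z\in W^{1,\infty}(\Omega)$, $b\in C^1(\mathbb{R})$ with $b'\in L^\infty(\mathbb{R})$; with $D(s):=\int_0^s f'(\xi)/b(\xi)d\xi$ assume $D\in C^1$, $D(\mathbb{R})=\mathbb{R}$, $\inf D'>0$. $\mathrm{Lip}_{[-C,C]}(f):=\sup_{-C\le u,v\le C,u\ne v}|f(u)-f(v)|/|u-v|$. Boundary entropy pair: $\eta\in C^2(\mathbb{R})$ convex, $q\in C^1(\mathbb{R})$, $q'=\eta'f'$, some $w$ with $\eta(w)=\eta'(w)=q(w)=0$. Entropy process solution: $\mu\in L^\infty(\Omega_T\times]0,1[)$ such that with $C=\|\mu\|_\infty$, for all boundary entropy pairs and all $\varphi\ge0$ smooth with compact support in $\overline\Omega\times[0,T[$: $\int_0^T\int_\Omega\int_0^1\eta(\mu)\partial_t\varphi+q(\mu)\partial_x\varphi-\eta'(\mu)z'(x)b(\mu)\varphi\,d\alpha dxdt+\int_\Omega\eta(u_0)\varphi(\cdot,0)dx+\mathrm{Lip}_{[-C,C]}(f)\int_0^T\eta(u_r)\varphi(x_r,t)+\eta(u_l)\varphi(x_l,t)dt\ge0$. Semi-Kružkov pairs: $\mathrm{sign}^+(s)=1$ for $s>0$, $0$ for $s\le0$; $\mathrm{sign}^-(s)=0$ for $s\ge0$, $-1$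 for $s<0$; $\eta_k^\pm(s):=\mathrm{sign}^\pm(s-k)(s-k)$, $q_k^\pm(s):=\mathrm{sign}^\pm(s-k)(f(s)-f(k))$. *)

theory Defs
  imports "HOL-Analysis.Analysis"
begin

definition Linf_on :: "'a::euclidean_space set \<Rightarrow> ('a \<Rightarrow> real) \<Rightarrow> bool" where
  "Linf_on S g \<longleftrightarrow> set_borel_measurable lborel S g \<and>
     (\<exists>c. AE p in lborel. p \<in> S \<longrightarrow> \<bar>g p\<bar> \<le> c)"

definition Linf_norm :: "'a::euclidean_space set \<Rightarrow> ('a \<Rightarrow> real) \<Rightarrow> real" where
  "Linf_norm S g = Inf {c. 0 \<le> c \<and> (AE p in lborel. p \<in> S \<longrightarrow> \<bar>g p\<bar> \<le> c)}"

definition smooth1 :: "(real \<Rightarrow> real) \<Rightarrow> bool" where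
  "smooth1 \<psi> \<longleftrightarrow> (\<forall>n x. ((deriv ^^ n) \<psi>) differentiable (at x))"

definition dx :: "(real \<Rightarrow> real \<Rightarrow> real) \<Rightarrow> real \<Rightarrow> real \<Rightarrow> real" where
  "dx g = (\<lambda>x t. deriv (\<lambda>y. g y t) x)"

definition dt :: "(real \<Rightarrow> real \<Rightarrow> real) \<Rightarrow> real \<Rightarrow> real \<Rightarrow> real" where
  "dt g = (\<lambda>x t. deriv (\<lambda>s. g x s) t)"

fun pderivs :: "bool list \<Rightarrow> (real \<Rightarrow> real \<Rightarrow> real) \<Rightarrow> real \<Rightarrow> real \<Rightarrow> real" where
  "pderivs [] g = g"
| "pderivs (True # ds) g = dx (pderivs ds g)"
| "pderivs (False # ds) g = dt (pderivs ds g)"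

definition smooth2 :: "(real \<Rightarrow> real \<Rightarrow> real) \<Rightarrow> bool" where
  "smooth2 g \<longleftrightarrow> (\<forall>ds.
      continuous_on UNIV (\<lambda>p::real\<times>real. pderivs ds g (fst p) (snd p)) \<and>
      (\<forall>x t. (\<lambda>y. pderivs ds g y t) differentiable (at x) \<and>
             (\<lambda>s. pderivs ds g x s) differentiable (at t)))"

text \<open>Nonnegative smooth test functions on closure(Omega) x [0,T[ with compact support in
  closure(Omega) x [0,T[ (taken as restrictions of smooth functions on the plane).\<close>
definition test_fun :: "real \<Rightarrow> real \<Rightarrow> real \<Rightarrow> (real \<Rightarrow> real \<Rightarrow> real) \<Rightarrow> bool" where
  "test_fun xl xr T \<phi> \<longleftrightarrow> smooth2 \<phi> \<and>
     (\<forall>x\<in>{xl..xr}. \<forall>t\<in>{0..<T}. 0 \<le> \<phi> x t) \<and>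
     (\<exists>T'<T. \<forall>x\<in>{xl..xr}. \<forall>t\<in>{T'..<T}. \<phi> x t = 0)"

definition W1inf_with_deriv :: "real \<Rightarrow> real \<Rightarrow> (real \<Rightarrow> real) \<Rightarrow> (real \<Rightarrow> real) \<Rightarrow> bool" where
  "W1inf_with_deriv xl xr z dz \<longleftrightarrow> Linf_on {xl<..<xr} z \<and> Linf_on {xl<..<xr} dz \<and>
     (\<forall>\<psi>. smooth1 \<psi> \<and> compact (closure {x. \<psi> x \<noteq> 0}) \<and> closure {x. \<psi> x \<noteq> 0} \<subseteq> {xl<..<xr}
        \<longrightarrow> (LINT x:{xl<..<xr}|lborel. z x * deriv \<psi> x) = - (LINT x:{xl<..<xr}|lborel. dz x * \<psi> x))"

definition C1_fun :: "(real \<Rightarrow> real) \<Rightarrow> bool" where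
  "C1_fun g \<longleftrightarrow> (\<forall>x. g differentiable (at x)) \<and> continuous_on UNIV (deriv g)"

definition C2_fun :: "(real \<Rightarrow> real) \<Rightarrow> bool" where
  "C2_fun g \<longleftrightarrow> (\<forall>x. g differentiable (at x)) \<and> C1_fun (deriv g)"

definition D_fun :: "(real \<Rightarrow> real) \<Rightarrow> (real \<Rightarrow> real) \<Rightarrow> real \<Rightarrow> real" where
  "D_fun f b s = (LBINT \<xi>=0..ereal s. deriv f \<xi> / b \<xi>)"

text \<open>Supremum of difference quotients on [-C,C]; the empty supremum (C = 0) is taken as 0
  (all difference quotients are nonnegative, so adding 0 does not change a nonempty sup).\<close>
definition Lip_on :: "real \<Rightarrow> (real \<Rightarrow> real) \<Rightarrow> real" where
  "Lip_on C f = Sup (insert 0 {\<bar>f u - f v\<bar> / \<bar>u - v\<bar> | u v.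
       u \<in> {-C..C} \<and> v \<in> {-C..C} \<and> u \<noteq> v})"

definition boundary_entropy_pair :: "(real \<Rightarrow> real) \<Rightarrow> (real \<Rightarrow> real) \<Rightarrow> (real \<Rightarrow> real) \<Rightarrow> bool" where
  "boundary_entropy_pair f \<eta> q \<longleftrightarrow> C2_fun \<eta> \<and> convex_on UNIV \<eta> \<and> C1_fun q \<and>
     (\<forall>s. deriv q s = deriv \<eta> s * deriv f s) \<and>
     (\<exists>w. \<eta> w = 0 \<and> deriv \<eta> w = 0 \<and> q w = 0)"

definition entropy_process_solution ::
  "real \<Rightarrow> real \<Rightarrow> real \<Rightarrow> (real \<Rightarrow> real) \<Rightarrow> (real \<Rightarrow> real) \<Rightarrow> (real \<Rightarrow> real) \<Rightarrow>
   (real \<Rightarrow> real) \<Rightarrow> (real \<Rightarrow> real) \<Rightarrow> (real \<Rightarrow> real) \<Rightarrow>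
   (real \<Rightarrow> real \<Rightarrow> real \<Rightarrow> real) \<Rightarrow> bool" where
  "entropy_process_solution xl xr T u0 ul ur f dz b \<mu> \<longleftrightarrow>
     Linf_on ({xl<..<xr} \<times> {0<..<T} \<times> {0<..<1}) (\<lambda>p. \<mu> (fst p) (fst (snd p)) (snd (snd p))) \<and>
     (let C = Linf_norm ({xl<..<xr} \<times> {0<..<T} \<times> {0<..<1}) (\<lambda>p. \<mu> (fst p) (fst (snd p)) (snd (snd p)))
      in \<forall>\<eta> q \<phi>. boundary_entropy_pair f \<eta> q \<and> test_fun xl xr T \<phi> \<longrightarrow>
        (LINT t:{0<..<T}|lborel. LINT x:{xl<..<xr}|lborel. LINT \<alpha>:{0<..<1}|lborel.
            \<eta> (\<mu> x t \<alpha>) * dt \<phi> x t + q (\<mu> x t \<alpha>) * dx \<phi> x t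
            - deriv \<eta> (\<mu> x t \<alpha>) * dz x * b (\<mu> x t \<alpha>) * \<phi> x t)
        + (LINT x:{xl<..<xr}|lborel. \<eta> (u0 x) * \<phi> x 0)
        + Lip_on C f * (LINT t:{0<..<T}|lborel. \<eta> (ur t) * \<phi> xr t + \<eta> (ul t) * \<phi> xl t)
        \<ge> 0)"

definition sign_plus :: "real \<Rightarrow> real" where
  "sign_plus s = (if s > 0 then 1 else 0)"

definition sign_minus :: "real \<Rightarrow> real" where
  "sign_minus s = (if s \<ge> 0 then 0 else -1)"

text \<open>Sign choice: True stands for +, False for -.\<close>
definition sign_pm :: "bool \<Rightarrow> real \<Rightarrow> real" where
  "sign_pm pm = (if pm then sign_plus else sign_minus)"

definition eta_k :: "bool \<Rightarrow> real \<Rightarrow> real \<Rightarrow> real" where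
  "eta_k pm k s = sign_pm pm (s - k) * (s - k)"

definition q_k :: "(real \<Rightarrow> real) \<Rightarrow> bool \<Rightarrow> real \<Rightarrow> real \<Rightarrow> real" where
  "q_k f pm k s = sign_pm pm (s - k) * (f s - f k)"

end

theory Submission
  imports Defs
begin

lemma DERIV_pw:
  fixes F G H G' H' :: "real \<Rightarrow> real"
  assumes F: "\<And>y. F y = (if y \<le> a then G y else H y)"
    and G: "\<And>y. (G has_real_derivative G' y) (at y)"
    and H: "\<And>y. (H has_real_derivative H' y) (at y)"
    and c: "G a = H a" "G' a = H' a"
  shows "(F has_real_derivative (if y \<le> a then G' y else H' y)) (at y)"
proof -
  have cS: "closure {..a} = {..a}" by simp
  have cT: "closure {a<..} = {a..}" by simp
  have "((\<lambda>x. if x \<in> {..a} then G x else H x) has_vector_derivative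
      (if y \<in> {..a} then G' y else H' y)) (at y within UNIV)"
  proof (rule has_vector_derivative_If_within_closures[where T="{a<..}"])
    show "y \<in> {..a} \<union> {a<..}" by auto
    show "UNIV = {..a} \<union> {a<..}" by auto
    show "(G has_vector_derivative G' y) (at y within {..a} \<union> (closure {..a} \<inter> closure {a<..}))"
      using G[of y] by (simp add: has_real_derivative_iff_has_vector_derivative has_vector_derivative_at_within)
    show "(H has_vector_derivative H' y) (at y within {a<..} \<union> (closure {..a} \<inter> closure {a<..}))"
      using H[of y] by (simp add: has_real_derivative_iff_has_vector_derivative has_vector_derivative_at_within)
    show "G y = H y" if "y \<in> closure {..a}" "y \<in> closure {a<..}"
      using that c by (simp only: cS cT) auto
    show "G' y = H' y" if "y \<in> closure {..a}" "y \<in> closure {a<..}"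
      using that c by (simp only: cS cT) auto
  qed
  moreover have "F = (\<lambda>x. if x \<in> {..a} then G x else H x)" using F by (auto simp: fun_eq_iff)
  ultimately show ?thesis by (simp add: has_real_derivative_iff_has_vector_derivative)
qed

definition clamp :: "real \<Rightarrow> real" where "clamp y = max 0 (min 1 y)"
definition P0 :: "real \<Rightarrow> real" where "P0 y = clamp y ^ 3 - clamp y ^ 4 / 2 + max 0 (y - 1)"
definition P1 :: "real \<Rightarrow> real" where "P1 y = 3 * clamp y ^ 2 - 2 * clamp y ^ 3"
definition P2 :: "real \<Rightarrow> real" where "P2 y = 6 * max 0 (y - y ^ 2)"

lemma P0_pw: "P0 y = (if y \<le> 0 then 0 else (if y \<le> 1 then y^3 - y^4/2 else y - 1/2))"
  by (auto simp: P0_def clamp_def)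
lemma P1_pw: "P1 y = (if y \<le> 0 then 0 else (if y \<le> 1 then 3*y^2 - 2*y^3 else 1))"
  by (auto simp: P1_def clamp_def)
lemma P2_pw: "P2 y = (if y \<le> 0 then 0 else (if y \<le> 1 then 6*y - 6*y^2 else 0))"
proof -
  have a: "y \<le> 0 \<Longrightarrow> y - y^2 \<le> 0" by (simp add: power2_eq_square) (metis mult_nonpos_nonpos le_add_same_cancel1 add.commute diff_le_0_iff_le le_add_same_cancel2 order_trans)
  have b: "1 < y \<Longrightarrow> y - y^2 \<le> 0" by (simp add: power2_eq_square)
  have c: "0 \<le> y \<Longrightarrow> y \<le> 1 \<Longrightarrow> 0 \<le> y - y^2" by (simp add: power2_eq_square mult_left_le)
  show ?thesis using a b c by (auto simp: P2_def max_def)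
qed

lemma DERIV_P0: "(P0 has_real_derivative P1 y) (at y)"
proof -
  let ?H = "\<lambda>y::real. if y \<le> 1 then y^3 - y^4/2 else y - 1/2"
  let ?H' = "\<lambda>y::real. if y \<le> 1 then 3*y^2 - 2*y^3 else 1"
  have H: "(?H has_real_derivative ?H' y) (at y)" for y
    by (rule DERIV_pw[where G="\<lambda>y. y^3 - y^4/2" and H="\<lambda>y. y - 1/2"])
       (auto intro!: derivative_eq_intros simp: power2_eq_square power3_eq_cube)
  have "(P0 has_real_derivative (if y \<le> 0 then 0 else ?H' y)) (at y)"
    by (rule DERIV_pw[where G="\<lambda>y. 0" and H="?H" and G'="\<lambda>y. 0" and H'="?H'"])
       (simp add: P0_pw, simp, rule H, simp, simp)
  then show ?thesis by (simp add: P1_pw)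
qed

lemma DERIV_P1: "(P1 has_real_derivative P2 y) (at y)"
proof -
  let ?H = "\<lambda>y::real. if y \<le> 1 then 3*y^2 - 2*y^3 else 1"
  let ?H' = "\<lambda>y::real. if y \<le> 1 then 6*y - 6*y^2 else 0"
  have H: "(?H has_real_derivative ?H' y) (at y)" for y
    by (rule DERIV_pw[where G="\<lambda>y. 3*y^2 - 2*y^3" and H="\<lambda>y. 1"])
       (auto intro!: derivative_eq_intros simp: power2_eq_square power3_eq_cube)
  have "(P1 has_real_derivative (if y \<le> 0 then 0 else ?H' y)) (at y)"
    by (rule DERIV_pw[where G="\<lambda>y. 0" and H="?H" and G'="\<lambda>y. 0" and H'="?H'"])
       (simp add: P1_pw, simp, rule H, simp, simp)
  then show ?thesis by (simp add: P2_pw)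
qed

lemma P2_cont: "continuous_on UNIV P2"
  unfolding P2_def by (intro continuous_intros)
lemma P1_cont: "continuous_on UNIV P1"
  unfolding P1_def clamp_def by (intro continuous_intros)
lemma P2_nonneg: "0 \<le> P2 y" by (simp add: P2_def)
lemma clamp_bounds: "0 \<le> clamp y" "clamp y \<le> 1" by (auto simp: clamp_def)

lemma P1_bounds: "0 \<le> P1 y" "P1 y \<le> 1"
proof -
  define c where "c = clamp y"
  have c: "0 \<le> c" "c \<le> 1" using clamp_bounds c_def by auto
  have "P1 y = c^2 * (3 - 2*c)" by (simp add: P1_def c_def algebra_simps power2_eq_square power3_eq_cube)
  then show "0 \<le> P1 y" using c by simp
  have "1 - P1 y = (1 - c)^2 * (1 + 2*c)" by (simp add: P1_def c_def algebra_simps power2_eq_square power3_eq_cube)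
  then show "P1 y \<le> 1" using c by (smt (verit) mult_nonneg_nonneg zero_le_power2)
qed

lemma P1_mono: "a \<le> b \<Longrightarrow> P1 a \<le> P1 b"
  by (rule DERIV_nonneg_imp_nondecreasing[of a b P1]) (auto intro: DERIV_P1 P2_nonneg)

lemma P0_bounds: "0 \<le> P0 y" "P0 y \<le> max 0 y"
proof -
  show "0 \<le> P0 y"
  proof (cases "y \<le> 0")
    case False
    show ?thesis
    proof (cases "y \<le> 1")
      case True
      have "y^3 * y \<le> y^3 * 1" using True False by (intro mult_left_mono) auto
      moreover have "y^4 = y^3 * y" by (simp add: eval_nat_numeral)
      ultimately have "y^4 \<le> y^3" by simp
      then show ?thesis using True False by (simp add: P0_pw) (smt (verit) zero_le_power)
    qed (use False in \<open>simp add: P0_pw\<close>)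
  qed (simp add: P0_pw)
  show "P0 y \<le> max 0 y"
  proof (cases "y \<le> 0")
    case False
    show ?thesis
    proof (cases "y \<le> 1")
      case True
      have "y^2 \<le> 1" using True False by (simp add: power_le_one)
      then have "y * y^2 \<le> y * 1" using False by (intro mult_left_mono) auto
      moreover have "y^3 = y * y^2" by (simp add: eval_nat_numeral)
      ultimately have "y^3 \<le> y" by simp
      moreover have "0 \<le> y^4" by simp
      moreover have "P0 y = y^3 - y^4/2" using True False by (simp add: P0_pw)
      moreover have "max 0 y = y" using False by simp
      ultimately show ?thesis by linarith
    qed (use False in \<open>simp add: P0_pw\<close>)
  qed (simp add: P0_pw)
qed

definition sg :: "bool \<Rightarrow> real" where "sg pm = (if pm then 1 else -1)"
lemma sg_sq[simp]: "sg pm * sg pm = 1" by (simp add: sg_def)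
lemma sg_abs[simp]: "\<bar>sg pm\<bar> = 1" by (simp add: sg_def)

definition etaN :: "bool \<Rightarrow> real \<Rightarrow> nat \<Rightarrow> real \<Rightarrow> real" where
  "etaN pm k n s = P0 (real (Suc n) * (sg pm * (s - k))) / real (Suc n)"
definition etaN' :: "bool \<Rightarrow> real \<Rightarrow> nat \<Rightarrow> real \<Rightarrow> real" where
  "etaN' pm k n s = sg pm * P1 (real (Suc n) * (sg pm * (s - k)))"
definition etaN'' :: "bool \<Rightarrow> real \<Rightarrow> nat \<Rightarrow> real \<Rightarrow> real" where
  "etaN'' pm k n s = real (Suc n) * P2 (real (Suc n) * (sg pm * (s - k)))"
definition qN :: "(real \<Rightarrow> real) \<Rightarrow> bool \<Rightarrow> real \<Rightarrow> nat \<Rightarrow> real \<Rightarrow> real" where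
  "qN f pm k n s = (LBINT r=ereal k..ereal s. etaN' pm k n r * deriv f r)"

lemma DERIV_etaN: "(etaN pm k n has_real_derivative etaN' pm k n s) (at s)"
proof -
  have i: "((\<lambda>s. real (Suc n) * (sg pm * (s - k))) has_real_derivative real (Suc n) * (sg pm * 1)) (at s)"
    by (intro derivative_eq_intros) auto
  have "((\<lambda>s. P0 (real (Suc n) * (sg pm * (s - k))) / real (Suc n)) has_real_derivative
      P1 (real (Suc n) * (sg pm * (s - k))) * (real (Suc n) * (sg pm * 1)) / real (Suc n)) (at s)"
    by (intro DERIV_cdivide DERIV_chain2[OF DERIV_P0 i])
  moreover have "P1 (real (Suc n) * (sg pm * (s - k))) * (real (Suc n) * (sg pm * 1)) / real (Suc n)
     = etaN' pm k n s" unfolding etaN'_def by (simp del: of_nat_Suc)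
  ultimately show ?thesis unfolding etaN_def[abs_def] by simp
qed

lemma DERIV_etaN': "(etaN' pm k n has_real_derivative etaN'' pm k n s) (at s)"
proof -
  have i: "((\<lambda>s. real (Suc n) * (sg pm * (s - k))) has_real_derivative real (Suc n) * (sg pm * 1)) (at s)"
    by (intro derivative_eq_intros) auto
  have "((\<lambda>s. sg pm * P1 (real (Suc n) * (sg pm * (s - k)))) has_real_derivative
      sg pm * (P2 (real (Suc n) * (sg pm * (s - k))) * (real (Suc n) * (sg pm * 1)))) (at s)"
    by (intro DERIV_cmult DERIV_chain2[OF DERIV_P1 i])
  moreover have "sg pm * (P2 (real (Suc n) * (sg pm * (s - k))) * (real (Suc n) * (sg pm * 1)))
      = etaN'' pm k n s"
    unfolding etaN''_def by (simp add: sg_def)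
  ultimately show ?thesis unfolding etaN'_def[abs_def] by simp
qed

lemma etaN''_cont: "continuous_on UNIV (etaN'' pm k n)"
  unfolding etaN''_def[abs_def]
  by (intro continuous_intros continuous_on_compose2[OF P2_cont]) auto

lemma etaN'_cont: "continuous_on UNIV (etaN' pm k n)"
  unfolding etaN'_def[abs_def]
  by (intro continuous_intros continuous_on_compose2[OF P1_cont]) auto

lemma deriv_etaN: "deriv (etaN pm k n) = etaN' pm k n"
  using DERIV_etaN DERIV_imp_deriv by blast
lemma deriv_etaN': "deriv (etaN' pm k n) = etaN'' pm k n"
  using DERIV_etaN' DERIV_imp_deriv by blast

lemma etaN'_mono: "x \<le> y \<Longrightarrow> etaN' pm k n x \<le> etaN' pm k n y"
  unfolding etaN'_def sg_def
  by (auto intro!: P1_mono mult_left_mono)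

lemma etaN'_bound: "\<bar>etaN' pm k n s\<bar> \<le> 1"
  using P1_bounds[of "real (Suc n) * (sg pm * (s - k))"] by (simp add: etaN'_def abs_mult)

lemma DERIV_qN:
  assumes cf: "continuous_on UNIV (deriv f)"
  shows "(qN f pm k n has_real_derivative (etaN' pm k n s * deriv f s)) (at s)"
proof -
  let ?g = "\<lambda>r. etaN' pm k n r * deriv f r"
  define a where "a = min k s - 1"
  define b where "b = max k s + 1"
  have cg: "continuous_on {a..b} ?g"
    by (intro continuous_intros continuous_on_subset[OF etaN'_cont] continuous_on_subset[OF cf]) auto
  have "((\<lambda>u. LBINT y=k..u. ?g y) has_vector_derivative ?g s) (at s within {a..b})"
    by (rule interval_integral_FTC2[OF _ _ cg]) (auto simp: a_def b_def)
  then have "((\<lambda>u. LBINT y=k..u. ?g y) has_vector_derivative ?g s) (at s within {a<..<b})"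
    by (rule has_vector_derivative_within_subset) auto
  then have "((\<lambda>u. LBINT y=k..u. ?g y) has_vector_derivative ?g s) (at s)"
    by (subst (asm) has_vector_derivative_within_open) (auto simp: a_def b_def)
  then show ?thesis
    unfolding qN_def[abs_def] by (simp add: has_real_derivative_iff_has_vector_derivative)
qed

lemma entropy_pair_N:
  assumes cf: "continuous_on UNIV (deriv f)"
  shows "boundary_entropy_pair f (etaN pm k n) (qN f pm k n)"
proof -
  have dq: "deriv (qN f pm k n) = (\<lambda>s. etaN' pm k n s * deriv f s)"
    using DERIV_qN[OF cf] DERIV_imp_deriv by blast
  have C2: "C2_fun (etaN pm k n)"
    unfolding C2_fun_def C1_fun_def deriv_etaN deriv_etaN'
    using DERIV_etaN DERIV_etaN' etaN''_cont real_differentiable_def by blast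
  have cv: "convex_on UNIV (etaN pm k n)"
    by (rule convex_on_realI[OF _ DERIV_etaN etaN'_mono]) auto
  have C1: "C1_fun (qN f pm k n)"
    unfolding C1_fun_def dq
  proof
    show "\<forall>x. qN f pm k n differentiable at x" using DERIV_qN[OF cf] real_differentiable_def by blast
    show "continuous_on UNIV (\<lambda>s. etaN' pm k n s * deriv f s)"
      by (intro continuous_intros etaN'_cont cf)
  qed
  have w: "etaN pm k n k = 0 \<and> deriv (etaN pm k n) k = 0 \<and> qN f pm k n k = 0"
    by (simp add: deriv_etaN etaN_def etaN'_def qN_def P0_pw P1_pw)
  show ?thesis unfolding boundary_entropy_pair_def
    using C2 cv C1 w by (auto simp: dq deriv_etaN)
qed

lemma mvt_bound:
  fixes F F' :: "real \<Rightarrow> real"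
  assumes d: "\<And>r. min a b \<le> r \<Longrightarrow> r \<le> max a b \<Longrightarrow> (F has_real_derivative F' r) (at r)"
    and M: "\<And>r. min a b \<le> r \<Longrightarrow> r \<le> max a b \<Longrightarrow> \<bar>F' r\<bar> \<le> M"
  shows "\<bar>F b - F a\<bar> \<le> M * \<bar>b - a\<bar>"
proof -
  have gen: "\<bar>F v - F u\<bar> \<le> M * (v - u)" if uv: "u < v" and "min a b = u" "max a b = v" for u v
  proof -
    have dd: "\<And>x. u \<le> x \<Longrightarrow> x \<le> v \<Longrightarrow> (F has_real_derivative F' x) (at x)"
      using d that by auto
    obtain z where z: "u < z" "z < v" "F v - F u = (v - u) * F' z"
      using MVT2[OF uv dd] by blast
    have "\<bar>F' z\<bar> \<le> M" using M z that by auto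
    then have "\<bar>(v - u) * F' z\<bar> \<le> (v - u) * M" using uv by (simp add: abs_mult mult_left_mono)
    then show ?thesis using z by (simp add: mult.commute)
  qed
  consider "a < b" | "a = b" | "b < a" by linarith
  then show ?thesis
  proof cases
    case 1 then show ?thesis using gen[of a b] by simp
  next
    case 3 then show ?thesis using gen[of b a] by (simp add: abs_minus_commute)
  qed simp
qed

lemma cont_bound:
  fixes g :: "real \<Rightarrow> real"
  assumes "continuous_on {a..b} g"
  shows "\<exists>M. \<forall>x\<in>{a..b}. \<bar>g x\<bar> \<le> M"
proof -
  have "compact (g ` {a..b})" by (rule compact_continuous_image[OF assms compact_Icc])
  then have "bounded (g ` {a..b})" by (rule compact_imp_bounded)
  then show ?thesis unfolding bounded_iff by auto
qed

lemma eta_k_alt: "eta_k pm k s = max 0 (sg pm * (s - k))"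
  by (auto simp: eta_k_def sign_pm_def sign_plus_def sign_minus_def sg_def)

lemma sign_pm_alt: "sign_pm pm (s - k) = (if sg pm * (s - k) > 0 then sg pm else 0)"
  by (auto simp: sign_pm_def sign_plus_def sign_minus_def sg_def)

lemma P0_ge1: "1 \<le> z \<Longrightarrow> P0 z = z - 1/2"
  by (cases "z = 1") (auto simp: P0_pw)
lemma P1_ge1: "1 \<le> z \<Longrightarrow> P1 z = 1"
  by (cases "z = 1") (auto simp: P1_pw)

lemma eventually_big:
  assumes "(y::real) > 0"
  shows "eventually (\<lambda>n. 1 \<le> real (Suc n) * y) sequentially"
proof -
  obtain N :: nat where N: "1 / y < real N" using reals_Archimedean2 by blast
  show ?thesis unfolding eventually_sequentially
  proof (intro exI allI impI)
    fix n assume "N \<le> n"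
    then have "1 / y < real (Suc n)" using N by linarith
    then show "1 \<le> real (Suc n) * y" using assms by (simp add: field_simps)
  qed
qed

lemma etaN_lim: "(\<lambda>n. etaN pm k n s) \<longlonglongrightarrow> eta_k pm k s"
proof (cases "sg pm * (s - k) > 0")
  case False
  then have "\<And>n. etaN pm k n s = 0"
    by (simp add: etaN_def P0_pw mult_nonneg_nonpos)
  moreover have "eta_k pm k s = 0" using False by (simp add: eta_k_alt)
  ultimately show ?thesis by simp
next
  case True
  define y where "y = sg pm * (s - k)"
  have y: "y > 0" using True y_def by simp
  have ev: "eventually (\<lambda>n. y - inverse (real (Suc n)) / 2 = etaN pm k n s) sequentially"
    using eventually_big[OF y]
  proof eventually_elim
    case (elim n)
    then show ?case unfolding etaN_def y_def[symmetric] using y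
      by (simp add: P0_ge1 field_simps del: of_nat_Suc)
  qed
  have "(\<lambda>n. y - inverse (real (Suc n)) / 2) \<longlonglongrightarrow> y"
    using tendsto_diff[OF tendsto_const tendsto_divide_zero[OF LIMSEQ_inverse_real_of_nat, of 2], of y]
    by simp
  then have "(\<lambda>n. etaN pm k n s) \<longlonglongrightarrow> y"
    by (rule Lim_transform_eventually[OF _ ev])
  then show ?thesis using y by (simp add: eta_k_alt y_def)
qed

lemma etaN'_lim: "(\<lambda>n. etaN' pm k n s) \<longlonglongrightarrow> sign_pm pm (s - k)"
proof (cases "sg pm * (s - k) > 0")
  case False
  then have "\<And>n. etaN' pm k n s = 0"
    by (simp add: etaN'_def P1_pw mult_nonneg_nonpos)
  then show ?thesis using False by (simp add: sign_pm_alt)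
next
  case True
  define y where "y = sg pm * (s - k)"
  have y: "y > 0" using True y_def by simp
  have ev: "eventually (\<lambda>n. sg pm = etaN' pm k n s) sequentially"
    using eventually_big[OF y]
  proof eventually_elim
    case (elim n)
    then show ?case unfolding etaN'_def y_def[symmetric] using y
      by (simp add: P1_ge1 del: of_nat_Suc)
  qed
  then have "(\<lambda>n. etaN' pm k n s) \<longlonglongrightarrow> sg pm"
    by (rule Lim_transform_eventually[OF tendsto_const])
  then show ?thesis using True by (simp add: sign_pm_alt)
qed

lemma etaN_bound: "\<bar>etaN pm k n s\<bar> \<le> \<bar>s - k\<bar>"
proof -
  define y where "y = sg pm * (s - k)"
  have a: "\<bar>y\<bar> = \<bar>s - k\<bar>" by (simp add: y_def abs_mult)
  have "0 \<le> P0 (real (Suc n) * y)" "P0 (real (Suc n) * y) \<le> max 0 (real (Suc n) * y)"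
    using P0_bounds by auto
  moreover have "max 0 (real (Suc n) * y) \<le> real (Suc n) * \<bar>y\<bar>" by (simp add: abs_ge_self)
  ultimately have "\<bar>P0 (real (Suc n) * y)\<bar> \<le> real (Suc n) * \<bar>y\<bar>" by linarith
  then have "\<bar>P0 (real (Suc n) * y)\<bar> / real (Suc n) \<le> \<bar>y\<bar>"
    by (simp add: divide_le_eq mult.commute del: of_nat_Suc)
  then show ?thesis using a by (simp add: etaN_def y_def[symmetric])
qed

lemma DERIV_f:
  assumes "\<forall>x. f differentiable (at x)"
  shows "(f has_real_derivative deriv f x) (at x)"
  using assms DERIV_deriv_iff_real_differentiable by blast

lemma qN_bound:
  assumes cf: "continuous_on UNIV (deriv f)"
    and M: "\<And>r. min k s \<le> r \<Longrightarrow> r \<le> max k s \<Longrightarrow> \<bar>deriv f r\<bar> \<le> M"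
  shows "\<bar>qN f pm k n s\<bar> \<le> M * \<bar>s - k\<bar>"
proof -
  have "\<bar>qN f pm k n s - qN f pm k n k\<bar> \<le> M * \<bar>s - k\<bar>"
  proof (rule mvt_bound[OF DERIV_qN[OF cf]])
    fix r assume r: "min k s \<le> r" "r \<le> max k s"
    have "\<bar>etaN' pm k n r * deriv f r\<bar> \<le> 1 * M"
      unfolding abs_mult using etaN'_bound M[OF r] by (intro mult_mono) auto
    then show "\<bar>etaN' pm k n r * deriv f r\<bar> \<le> M" by simp
  qed
  then show ?thesis by (simp add: qN_def)
qed

lemma qN_lim:
  assumes df: "\<forall>x. f differentiable (at x)" and cf: "continuous_on UNIV (deriv f)"
  shows "(\<lambda>n. qN f pm k n s) \<longlonglongrightarrow> q_k f pm k s"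
proof (cases "sg pm * (s - k) > 0")
  case False
  have "qN f pm k n s = 0" for n
  proof -
    have "\<bar>qN f pm k n s - qN f pm k n k\<bar> \<le> 0 * \<bar>s - k\<bar>"
    proof (rule mvt_bound[OF DERIV_qN[OF cf]])
      fix r assume r: "min k s \<le> r" "r \<le> max k s"
      have "sg pm * (r - k) \<le> 0" using False r by (auto simp: sg_def min_def max_def split: if_splits)
      then have "etaN' pm k n r = 0" by (simp add: etaN'_def P1_pw mult_nonneg_nonpos)
      then show "\<bar>etaN' pm k n r * deriv f r\<bar> \<le> 0" by simp
    qed
    then show ?thesis by (simp add: qN_def)
  qed
  then show ?thesis using False by (simp add: q_k_def sign_pm_alt)
next
  case True
  define y where "y = sg pm * (s - k)"
  have y: "y > 0" using True y_def by simp
  define l where "l = (\<lambda>n. k + sg pm * inverse (real (Suc n)))"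
  obtain M where M: "\<forall>x\<in>{k-1..k+1}. \<bar>deriv f x\<bar> \<le> M"
    using cont_bound[OF continuous_on_subset[OF cf]] by blast
  have inv_le: "inverse (real (Suc n)) \<le> 1" for n by (simp add: inverse_le_1_iff)
  have l_close: "\<bar>l n - k\<bar> = inverse (real (Suc n))" for n by (simp add: l_def abs_mult)
  have qb: "\<bar>qN f pm k n (l n)\<bar> \<le> M * inverse (real (Suc n))" for n
  proof -
    have "\<bar>qN f pm k n (l n)\<bar> \<le> M * \<bar>l n - k\<bar>"
    proof (rule qN_bound[OF cf])
      fix r assume "min k (l n) \<le> r" "r \<le> max k (l n)"
      then have "r \<in> {k-1..k+1}" using l_close[of n] inv_le[of n] by (auto simp: min_def max_def split: if_splits)
      then show "\<bar>deriv f r\<bar> \<le> M" using M by blast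
    qed
    then show ?thesis using l_close by simp
  qed
  have ev: "eventually (\<lambda>n. qN f pm k n (l n) + sg pm * (f s - f (l n)) = qN f pm k n s) sequentially"
    using eventually_big[OF y]
  proof eventually_elim
    case (elim n)
    let ?D = "\<lambda>r. qN f pm k n r - sg pm * f r"
    have "\<bar>?D s - ?D (l n)\<bar> \<le> 0 * \<bar>s - l n\<bar>"
    proof (rule mvt_bound)
      fix r assume r: "min (l n) s \<le> r" "r \<le> max (l n) s"
      show "(?D has_real_derivative (etaN' pm k n r * deriv f r - sg pm * deriv f r)) (at r)"
        by (intro DERIV_diff DERIV_qN[OF cf] DERIV_cmult DERIV_f[OF df])
      have "1 \<le> real (Suc n) * (sg pm * (r - k))"
      proof -
        have yN: "inverse (real (Suc n)) \<le> y"
          using elim by (simp add: field_simps del: of_nat_Suc)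
        have "sg pm * (r - k) \<ge> inverse (real (Suc n))"
        proof (cases pm)
          case True
          then have "l n \<le> s" using yN by (simp add: l_def sg_def y_def)
          then show ?thesis using r True by (simp add: l_def sg_def)
        next
          case False
          then have "s \<le> l n" using yN by (simp add: l_def sg_def y_def)
          then show ?thesis using r False by (simp add: l_def sg_def)
        qed
        then have "real (Suc n) * (sg pm * (r - k)) \<ge> real (Suc n) * inverse (real (Suc n))"
          by (intro mult_left_mono) auto
        then show ?thesis by simp
      qed
      then have "etaN' pm k n r = sg pm" by (simp add: etaN'_def P1_ge1 del: of_nat_Suc)
      then show "\<bar>etaN' pm k n r * deriv f r - sg pm * deriv f r\<bar> \<le> 0" by simp
    qed
    then show ?case by (simp add: algebra_simps)
  qed
  have l_lim: "l \<longlonglongrightarrow> k + sg pm * 0"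
    unfolding l_def by (intro tendsto_intros LIMSEQ_inverse_real_of_nat)
  have fl: "(\<lambda>n. f (l n)) \<longlonglongrightarrow> f k"
    using l_lim DERIV_isCont[OF DERIV_f[OF df]] isCont_tendsto_compose by fastforce
  have q0: "(\<lambda>n. qN f pm k n (l n)) \<longlonglongrightarrow> 0"
  proof (rule Lim_null_comparison)
    show "eventually (\<lambda>n. norm (qN f pm k n (l n)) \<le> M * inverse (real (Suc n))) sequentially"
      using qb by simp
    show "(\<lambda>n. M * inverse (real (Suc n))) \<longlonglongrightarrow> 0"
      using tendsto_mult_right_zero[OF LIMSEQ_inverse_real_of_nat] by simp
  qed
  have "(\<lambda>n. qN f pm k n (l n) + sg pm * (f s - f (l n))) \<longlonglongrightarrow> 0 + sg pm * (f s - f k)"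
    by (intro tendsto_intros q0 fl)
  then have "(\<lambda>n. qN f pm k n s) \<longlonglongrightarrow> sg pm * (f s - f k)"
    using ev by (simp add: Lim_transform_eventually)
  then show ?thesis using True by (simp add: q_k_def sign_pm_alt)
qed

lemma emeasure_lborel_triple:
  fixes A B C :: "real set"
  assumes "A \<in> sets borel" "B \<in> sets borel" "C \<in> sets borel"
  shows "emeasure (lborel :: (real \<times> real \<times> real) measure) (A \<times> B \<times> C)
       = emeasure lborel A * emeasure lborel B * emeasure lborel C"
proof -
  have e1: "(lborel :: (real \<times> real \<times> real) measure) = lborel \<Otimes>\<^sub>M lborel"
    by (rule lborel_prod[symmetric])
  have e2: "(lborel :: (real \<times> real) measure) = lborel \<Otimes>\<^sub>M lborel"
    by (rule lborel_prod[symmetric])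
  have "emeasure (lborel :: (real \<times> real \<times> real) measure) (A \<times> B \<times> C)
      = emeasure (lborel \<Otimes>\<^sub>M lborel) (A \<times> (B \<times> C))" by (simp only: e1)
  also have "\<dots> = emeasure lborel A * emeasure (lborel :: (real \<times> real) measure) (B \<times> C)"
    using assms by (intro lborel.emeasure_pair_measure_Times) (auto simp: e2)
  also have "emeasure (lborel :: (real \<times> real) measure) (B \<times> C) = emeasure (lborel \<Otimes>\<^sub>M lborel) (B \<times> C)"
    by (simp only: e2)
  also have "\<dots> = emeasure lborel B * emeasure lborel C"
    using assms by (intro lborel.emeasure_pair_measure_Times) auto
  finally show ?thesis by (simp add: mult.assoc)
qed

definition perm3 :: "real \<times> real \<times> real \<Rightarrow> real \<times> real \<times> real" where
  "perm3 p = (fst (snd p), fst p, snd (snd p))"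

lemma perm3_cont: "continuous_on UNIV perm3"
  unfolding perm3_def by (intro continuous_intros)

lemma perm3_measurable[measurable]: "perm3 \<in> borel_measurable borel"
  by (rule borel_measurable_continuous_onI[OF perm3_cont])

lemma perm3_perm3[simp]: "perm3 (perm3 p) = p"
  by (simp add: perm3_def)

lemma distr_perm3: "distr lborel lborel perm3 = lborel"
proof (rule lborel_eqI[symmetric])
  fix l u :: "real \<times> real \<times> real"
  assume le: "\<And>b. b \<in> Basis \<Longrightarrow> l \<bullet> b \<le> u \<bullet> b"
  obtain l1 l2 l3 where l: "l = (l1, l2, l3)" by (cases l) auto
  obtain u1 u2 u3 where u: "u = (u1, u2, u3)" by (cases u) auto
  have bx: "box l u = {l1<..<u1} \<times> {l2<..<u2} \<times> {l3<..<u3}"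
    by (auto simp: l u box_def Basis_prod_def inner_prod_def)
  have pv: "perm3 -` box l u = {l2<..<u2} \<times> {l1<..<u1} \<times> {l3<..<u3}"
    by (auto simp: bx perm3_def)
  have "emeasure (distr lborel lborel perm3) (box l u) = emeasure lborel (perm3 -` box l u \<inter> space lborel)"
    by (rule emeasure_distr) auto
  also have "\<dots> = emeasure lborel ({l2<..<u2} \<times> {l1<..<u1} \<times> {l3<..<u3})"
    by (simp only: pv space_lborel space_borel Int_UNIV_right)
  also have "\<dots> = emeasure lborel (box l u)"
    unfolding bx by (simp add: emeasure_lborel_triple mult_ac)
  also have "\<dots> = (\<Prod>b\<in>Basis. (u - l) \<bullet> b)"
    using le by (rule emeasure_lborel_box)
  finally show "emeasure (distr lborel lborel perm3) (box l u) = (\<Prod>b\<in>Basis. (u - l) \<bullet> b)" .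
qed simp

definition ind3 :: "real set \<Rightarrow> real set \<Rightarrow> real set \<Rightarrow> (real \<Rightarrow> real \<Rightarrow> real \<Rightarrow> real) \<Rightarrow> real \<times> real \<times> real \<Rightarrow> real" where
  "ind3 St Sx Sa G q = indicator St (fst q) * (indicator Sx (fst (snd q)) *
      (indicator Sa (snd (snd q)) * G (fst (snd q)) (fst q) (snd (snd q))))"

lemma nest:
  assumes int: "integrable lborel (ind3 St Sx Sa G)"
  shows "(LINT t:St|lborel. LINT x:Sx|lborel. LINT \<alpha>:Sa|lborel. G x t \<alpha>) = integral\<^sup>L lborel (ind3 St Sx Sa G)"
proof -
  let ?h = "ind3 St Sx Sa G"
  have e3: "(lborel :: (real \<times> real \<times> real) measure) = lborel \<Otimes>\<^sub>M lborel"
    by (rule lborel_prod[symmetric])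
  have e2: "(lborel :: (real \<times> real) measure) = lborel \<Otimes>\<^sub>M lborel"
    by (rule lborel_prod[symmetric])
  have hm: "?h \<in> borel_measurable lborel" using int by (rule borel_measurable_integrable)
  have hm3: "?h \<in> borel_measurable (lborel \<Otimes>\<^sub>M (lborel \<Otimes>\<^sub>M lborel))"
    using hm by (simp only: e3 e2[symmetric])
  have int3: "integrable (lborel \<Otimes>\<^sub>M lborel) ?h" using int by (simp only: e3)
  have L: "(LINT t:St|lborel. LINT x:Sx|lborel. LINT \<alpha>:Sa|lborel. G x t \<alpha>)
      = (\<integral>t. (\<integral>x. (\<integral>\<alpha>. ?h (t, x, \<alpha>) \<partial>lborel) \<partial>lborel) \<partial>lborel)"
    by (simp add: set_lebesgue_integral_def ind3_def)
  have m1: "(\<lambda>p. ?h (fst (fst p), snd (fst p), snd p)) \<in> borel_measurable ((lborel \<Otimes>\<^sub>M lborel) \<Otimes>\<^sub>M lborel)"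
    by (rule measurable_compose[OF _ hm3]) measurable
  have m2: "(\<lambda>(t,x). \<integral>\<alpha>. ?h (t, x, \<alpha>) \<partial>lborel) \<in> borel_measurable (lborel \<Otimes>\<^sub>M lborel)"
  proof -
    have "(\<lambda>p. \<integral>\<alpha>. (\<lambda>p \<alpha>. ?h (fst p, snd p, \<alpha>)) p \<alpha> \<partial>lborel) \<in> borel_measurable (lborel \<Otimes>\<^sub>M lborel)"
      by (rule lborel.borel_measurable_lebesgue_integral) (use m1 in \<open>simp add: case_prod_beta'\<close>)
    then show ?thesis by (simp add: case_prod_beta')
  qed
  have m3: "(\<lambda>t. \<integral>x. (\<integral>\<alpha>. ?h (t, x, \<alpha>) \<partial>lborel) \<partial>lborel) \<in> borel_measurable lborel"
    by (rule lborel.borel_measurable_lebesgue_integral) (use m2 in simp)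
  have m4: "(\<lambda>t. \<integral>y. ?h (t, y) \<partial>lborel) \<in> borel_measurable lborel"
    by (rule lborel.borel_measurable_lebesgue_integral) (use hm3 in \<open>simp add: e2[symmetric] case_prod_beta'\<close>)
  have "integral\<^sup>L lborel ?h = integral\<^sup>L (lborel \<Otimes>\<^sub>M lborel) ?h" by (simp only: e3)
  also have "\<dots> = (\<integral>t. (\<integral>y. ?h (t, y) \<partial>lborel) \<partial>lborel)"
    by (rule lborel_pair.integral_fst'[OF int3, symmetric])
  also have "\<dots> = (\<integral>t. (\<integral>x. (\<integral>\<alpha>. ?h (t, x, \<alpha>) \<partial>lborel) \<partial>lborel) \<partial>lborel)"
  proof (rule integral_cong_AE[OF m4 m3])
    show "AE t in lborel. (\<integral>y. ?h (t, y) \<partial>lborel) = (\<integral>x. (\<integral>\<alpha>. ?h (t, x, \<alpha>) \<partial>lborel) \<partial>lborel)"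
      using lborel_pair.AE_integrable_fst'[OF int3]
    proof eventually_elim
      case (elim t)
      then have i2: "integrable (lborel \<Otimes>\<^sub>M lborel) (\<lambda>y. ?h (t, y))" by (simp only: e2)
      have "(\<integral>y. ?h (t, y) \<partial>lborel) = (\<integral>y. ?h (t, y) \<partial>(lborel \<Otimes>\<^sub>M lborel))" by (simp only: e2)
      also have "\<dots> = (\<integral>x. (\<integral>\<alpha>. ?h (t, x, \<alpha>) \<partial>lborel) \<partial>lborel)"
        using lborel_pair.integral_fst'[OF i2] by simp
      finally show ?case .
    qed
  qed
  finally show ?thesis using L by simp
qed

lemma bound3:
  fixes a A b B e D be P a0 b0 cz Kb Phi :: real
  assumes "\<bar>a\<bar> \<le> a0" "\<bar>A\<bar> \<le> Phi" "\<bar>b\<bar> \<le> b0" "\<bar>B\<bar> \<le> Phi" "\<bar>e\<bar> \<le> 1" "\<bar>D\<bar> \<le> cz"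
    "\<bar>be\<bar> \<le> Kb" "\<bar>P\<bar> \<le> Phi"
  shows "\<bar>a * A + b * B - e * D * be * P\<bar> \<le> a0 * Phi + b0 * Phi + cz * Kb * Phi"
proof -
  have 1: "\<bar>a * A\<bar> \<le> a0 * Phi" unfolding abs_mult using assms by (intro mult_mono) auto
  have 2: "\<bar>b * B\<bar> \<le> b0 * Phi" unfolding abs_mult using assms by (intro mult_mono) auto
  have "\<bar>e * D\<bar> \<le> 1 * cz" unfolding abs_mult using assms by (intro mult_mono) auto
  then have "\<bar>e * D * be\<bar> \<le> cz * Kb" unfolding abs_mult[of "e * D"] using assms by (simp add: mult_mono)
  then have 3: "\<bar>e * D * be * P\<bar> \<le> cz * Kb * Phi" unfolding abs_mult[of "e * D * be"] using assms
    by (intro mult_mono) auto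
  show ?thesis using 1 2 3 by linarith
qed

lemma triple_dct:
  fixes E Q E' :: "nat \<Rightarrow> real \<Rightarrow> real" and Ei Qi Sg b dzr :: "real \<Rightarrow> real"
    and nr Pt Px Pz :: "real \<times> real \<times> real \<Rightarrow> real" and S :: "(real \<times> real \<times> real) set"
  assumes S: "S \<in> sets lborel" "emeasure lborel S < \<infinity>"
    and mnr: "nr \<in> borel_measurable lborel" and mdz: "dzr \<in> borel_measurable lborel"
    and cP: "continuous_on UNIV Pt" "continuous_on UNIV Px" "continuous_on UNIV Pz"
    and cE: "\<And>n. continuous_on UNIV (E n)" "\<And>n. continuous_on UNIV (Q n)" "\<And>n. continuous_on UNIV (E' n)"
    and cb: "continuous_on UNIV b"
    and mi: "(\<lambda>q. Ei (nr q)) \<in> borel_measurable lborel" "(\<lambda>q. Qi (nr q)) \<in> borel_measurable lborel"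
      "(\<lambda>q. Sg (nr q)) \<in> borel_measurable lborel"
    and lim: "\<And>v. (\<lambda>n. E n v) \<longlonglongrightarrow> Ei v" "\<And>v. (\<lambda>n. Q n v) \<longlonglongrightarrow> Qi v" "\<And>v. (\<lambda>n. E' n v) \<longlonglongrightarrow> Sg v"
    and bnd: "\<And>n v. \<bar>v\<bar> \<le> c \<Longrightarrow> \<bar>E n v\<bar> \<le> K1" "\<And>n v. \<bar>v\<bar> \<le> c \<Longrightarrow> \<bar>Q n v\<bar> \<le> K2"
      "\<And>n v. \<bar>E' n v\<bar> \<le> 1" "\<And>v. \<bar>v\<bar> \<le> c \<Longrightarrow> \<bar>b v\<bar> \<le> Kb"
    and bndi: "\<And>v. \<bar>v\<bar> \<le> c \<Longrightarrow> \<bar>Ei v\<bar> \<le> K1" "\<And>v. \<bar>v\<bar> \<le> c \<Longrightarrow> \<bar>Qi v\<bar> \<le> K2"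
      "\<And>v. \<bar>Sg v\<bar> \<le> 1"
    and aenr: "AE q in lborel. \<bar>nr q\<bar> \<le> c"
    and aedz: "AE (q::real \<times> real \<times> real) in lborel. \<bar>dzr (fst (snd q))\<bar> \<le> cz"
    and bP: "\<And>q. q \<in> S \<Longrightarrow> \<bar>Pt q\<bar> \<le> Pb \<and> \<bar>Px q\<bar> \<le> Pb \<and> \<bar>Pz q\<bar> \<le> Pb"
  shows "(\<lambda>n. integral\<^sup>L lborel (\<lambda>q. indicator S q * (E n (nr q) * Pt q + Q n (nr q) * Px q
              - E' n (nr q) * dzr (fst (snd q)) * b (nr q) * Pz q)))
         \<longlonglongrightarrow> integral\<^sup>L lborel (\<lambda>q. indicator S q * (Ei (nr q) * Pt q + Qi (nr q) * Px q))
           - integral\<^sup>L lborel (\<lambda>q. indicator S q * (Sg (nr q) * dzr (fst (snd q)) * b (nr q) * Pz q))"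
    and "\<And>n. integrable lborel (\<lambda>q. indicator S q * (E n (nr q) * Pt q + Q n (nr q) * Px q
              - E' n (nr q) * dzr (fst (snd q)) * b (nr q) * Pz q))"
    and "integrable lborel (\<lambda>q. indicator S q * (Ei (nr q) * Pt q + Qi (nr q) * Px q))"
    and "integrable lborel (\<lambda>q. indicator S q * (Sg (nr q) * dzr (fst (snd q)) * b (nr q) * Pz q))"
proof -
  let ?g = "\<lambda>n q. indicator S q * (E n (nr q) * Pt q + Q n (nr q) * Px q
              - E' n (nr q) * dzr (fst (snd q)) * b (nr q) * Pz q)"
  let ?gA = "\<lambda>q. indicator S q * (Ei (nr q) * Pt q + Qi (nr q) * Px q)"
  let ?gS = "\<lambda>q. indicator S q * (Sg (nr q) * dzr (fst (snd q)) * b (nr q) * Pz q)"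
  let ?K = "K1 * Pb + K2 * Pb + cz * Kb * Pb"
  let ?w = "\<lambda>q. ?K * indicator S q"
  have mS: "(\<lambda>q. indicator S q :: real) \<in> borel_measurable lborel" using S by simp
  have mP: "Pt \<in> borel_measurable lborel" "Px \<in> borel_measurable lborel" "Pz \<in> borel_measurable lborel"
    using cP by (auto intro: borel_measurable_continuous_onI)
  have cfs: "continuous_on UNIV (\<lambda>q::real \<times> real \<times> real. fst (snd q))" by (intro continuous_intros)
  have mdz3: "(\<lambda>q::real \<times> real \<times> real. dzr (fst (snd q))) \<in> borel_measurable lborel"
  proof -
    have "dzr \<in> borel_measurable borel" using mdz by simp
    from measurable_compose[OF borel_measurable_continuous_onI[OF cfs] this] show ?thesis by simp
  qed
  have mE: "(\<lambda>q. E n (nr q)) \<in> borel_measurable lborel" "(\<lambda>q. Q n (nr q)) \<in> borel_measurable lborel"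
    "(\<lambda>q. E' n (nr q)) \<in> borel_measurable lborel" "(\<lambda>q. b (nr q)) \<in> borel_measurable lborel" for n
    using cE cb mnr by (auto intro: borel_measurable_continuous_on)
  have mg: "?g n \<in> borel_measurable lborel" for n
    using mS mP mdz3 mE by (intro borel_measurable_times borel_measurable_add borel_measurable_diff) auto
  have mgA: "?gA \<in> borel_measurable lborel"
    using mS mP mi by (intro borel_measurable_times borel_measurable_add) auto
  have mgS: "?gS \<in> borel_measurable lborel"
    using mS mP mi mdz3 mE by (intro borel_measurable_times) auto
  have iw: "integrable lborel ?w" using S by (intro integrable_mult_right integrable_real_indicator) auto
  have aeb: "AE q in lborel. \<bar>nr q\<bar> \<le> c \<and> \<bar>dzr (fst (snd q))\<bar> \<le> cz"
    using aenr aedz by (rule eventually_conj)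
  have bg: "AE q in lborel. norm (?g n q) \<le> ?w q" for n
    using aeb
  proof eventually_elim
    case (elim q)
    show ?case
    proof (cases "q \<in> S")
      case True
      have "\<bar>E n (nr q) * Pt q + Q n (nr q) * Px q - E' n (nr q) * dzr (fst (snd q)) * b (nr q) * Pz q\<bar> \<le> ?K"
        using elim bP[OF True] by (intro bound3 bnd) auto
      then show ?thesis using True by simp
    qed simp
  qed
  have bgA: "AE q in lborel. norm (?gA q) \<le> ?w q"
    using aeb
  proof eventually_elim
    case (elim q)
    show ?case
    proof (cases "q \<in> S")
      case True
      have "\<bar>Ei (nr q) * Pt q + Qi (nr q) * Px q - 0 * dzr (fst (snd q)) * b (nr q) * Pz q\<bar> \<le> ?K"
        using elim bP[OF True] by (intro bound3 bnd bndi) auto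
      then show ?thesis using True by simp
    qed simp
  qed
  have bgS: "AE q in lborel. norm (?gS q) \<le> ?w q"
    using aeb
  proof eventually_elim
    case (elim q)
    show ?case
    proof (cases "q \<in> S")
      case True
      have "\<bar>0 * Pt q + 0 * Px q - Sg (nr q) * dzr (fst (snd q)) * b (nr q) * Pz q\<bar> \<le> ?K"
        using elim bP[OF True] bnd(1)[of "nr q" 0] bnd(2)[of "nr q" 0] by (intro bound3 bnd bndi) auto
      then show ?thesis using True by simp
    qed simp
  qed
  show iA: "integrable lborel ?gA" by (rule Bochner_Integration.integrable_bound[OF iw mgA]) (use bgA in auto)
  show iS: "integrable lborel ?gS" by (rule Bochner_Integration.integrable_bound[OF iw mgS]) (use bgS in auto)
  have lim_pt: "AE q in lborel. (\<lambda>n. ?g n q) \<longlonglongrightarrow> ?gA q - ?gS q"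
  proof (rule AE_I2)
    fix q
    have "(\<lambda>n. ?g n q) \<longlonglongrightarrow> indicator S q * (Ei (nr q) * Pt q + Qi (nr q) * Px q
              - Sg (nr q) * dzr (fst (snd q)) * b (nr q) * Pz q)"
      by (intro tendsto_intros lim)
    then show "(\<lambda>n. ?g n q) \<longlonglongrightarrow> ?gA q - ?gS q" by (simp add: algebra_simps)
  qed
  have mlim: "(\<lambda>q. ?gA q - ?gS q) \<in> borel_measurable lborel" using mgA mgS by auto
  show "\<And>n. integrable lborel (?g n)"
    using integrable_dominated_convergence2[OF mlim mg iw lim_pt bg] .
  have "(\<lambda>n. integral\<^sup>L lborel (?g n)) \<longlonglongrightarrow> integral\<^sup>L lborel (\<lambda>q. ?gA q - ?gS q)"
    using integral_dominated_convergence[OF mlim mg iw lim_pt bg] .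
  moreover have "integral\<^sup>L lborel (\<lambda>q. ?gA q - ?gS q) = integral\<^sup>L lborel ?gA - integral\<^sup>L lborel ?gS"
    using iA iS by (rule Bochner_Integration.integral_diff)
  ultimately show "(\<lambda>n. integral\<^sup>L lborel (?g n)) \<longlonglongrightarrow> integral\<^sup>L lborel ?gA - integral\<^sup>L lborel ?gS"
    by simp
qed

lemma single_dct:
  fixes E :: "nat \<Rightarrow> real \<Rightarrow> real" and Ei u1 u2 p1 p2 :: "real \<Rightarrow> real" and A :: "real set"
  assumes A: "A \<in> sets lborel" "emeasure lborel A < \<infinity>"
    and mu: "set_borel_measurable lborel A u1" "set_borel_measurable lborel A u2"
    and aeu: "AE x in lborel. x \<in> A \<longrightarrow> \<bar>u1 x\<bar> \<le> c" "AE x in lborel. x \<in> A \<longrightarrow> \<bar>u2 x\<bar> \<le> c"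
    and cp: "continuous_on UNIV p1" "continuous_on UNIV p2"
    and cE: "\<And>n. continuous_on UNIV (E n)" "continuous_on UNIV Ei"
    and lim: "\<And>v. (\<lambda>n. E n v) \<longlonglongrightarrow> Ei v"
    and bnd: "\<And>n v. \<bar>v\<bar> \<le> c \<Longrightarrow> \<bar>E n v\<bar> \<le> K"
    and bp: "\<And>x. x \<in> A \<Longrightarrow> \<bar>p1 x\<bar> \<le> Pb \<and> \<bar>p2 x\<bar> \<le> Pb"
  shows "(\<lambda>n. LINT x:A|lborel. E n (u1 x) * p1 x + E n (u2 x) * p2 x)
      \<longlonglongrightarrow> (LINT x:A|lborel. Ei (u1 x) * p1 x + Ei (u2 x) * p2 x)"
proof -
  define r1 where "r1 = (\<lambda>x. indicator A x * u1 x)"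
  define r2 where "r2 = (\<lambda>x. indicator A x * u2 x)"
  let ?g = "\<lambda>n x. indicator A x * (E n (r1 x) * p1 x + E n (r2 x) * p2 x)"
  let ?gi = "\<lambda>x. indicator A x * (Ei (r1 x) * p1 x + Ei (r2 x) * p2 x)"
  have eq: "(LINT x:A|lborel. E n (u1 x) * p1 x + E n (u2 x) * p2 x) = integral\<^sup>L lborel (?g n)" for n
    unfolding set_lebesgue_integral_def
    by (intro Bochner_Integration.integral_cong refl) (auto simp: r1_def r2_def indicator_def)
  have eqi: "(LINT x:A|lborel. Ei (u1 x) * p1 x + Ei (u2 x) * p2 x) = integral\<^sup>L lborel ?gi"
    unfolding set_lebesgue_integral_def
    by (intro Bochner_Integration.integral_cong refl) (auto simp: r1_def r2_def indicator_def)
  have mr: "r1 \<in> borel_measurable lborel" "r2 \<in> borel_measurable lborel"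
    using mu by (auto simp: r1_def r2_def set_borel_measurable_def)
  have mS: "(\<lambda>x. indicator A x :: real) \<in> borel_measurable lborel" using A by simp
  have mp: "p1 \<in> borel_measurable lborel" "p2 \<in> borel_measurable lborel"
    using cp by (auto intro: borel_measurable_continuous_onI)
  have mE: "(\<lambda>x. E n (r1 x)) \<in> borel_measurable lborel" "(\<lambda>x. E n (r2 x)) \<in> borel_measurable lborel" for n
    using cE mr by (auto intro: borel_measurable_continuous_on)
  have mEi: "(\<lambda>x. Ei (r1 x)) \<in> borel_measurable lborel" "(\<lambda>x. Ei (r2 x)) \<in> borel_measurable lborel"
    using cE mr by (auto intro: borel_measurable_continuous_on)
  have mg: "?g n \<in> borel_measurable lborel" for n
    using mS mp mE by (intro borel_measurable_times borel_measurable_add) auto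
  have mgi: "?gi \<in> borel_measurable lborel"
    using mS mp mEi by (intro borel_measurable_times borel_measurable_add) auto
  let ?w = "\<lambda>x. (K * Pb + K * Pb) * indicator A x"
  have iw: "integrable lborel ?w" using A by (intro integrable_mult_right integrable_real_indicator) auto
  have bg: "AE x in lborel. norm (?g n x) \<le> ?w x" for n
    using eventually_conj[OF aeu]
  proof eventually_elim
    case (elim x)
    show ?case
    proof (cases "x \<in> A")
      case True
      have r: "r1 x = u1 x" "r2 x = u2 x" using True by (auto simp: r1_def r2_def)
      have "\<bar>E n (r1 x) * p1 x\<bar> \<le> K * Pb" unfolding abs_mult
        using elim True bp[OF True] bnd[of "u1 x" n] r by (intro mult_mono) auto
      moreover have "\<bar>E n (r2 x) * p2 x\<bar> \<le> K * Pb" unfolding abs_mult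
        using elim True bp[OF True] bnd[of "u2 x" n] r by (intro mult_mono) auto
      ultimately show ?thesis using True by simp
    qed simp
  qed
  have lim_pt: "AE x in lborel. (\<lambda>n. ?g n x) \<longlonglongrightarrow> ?gi x"
    by (rule AE_I2) (intro tendsto_intros lim)
  show ?thesis unfolding eq eqi
    by (rule integral_dominated_convergence[OF mgi mg iw lim_pt bg])
qed

lemma cont2_bound:
  fixes h :: "real \<Rightarrow> real \<Rightarrow> real"
  assumes "continuous_on UNIV (\<lambda>p. h (fst p) (snd p))"
  shows "\<exists>M. \<forall>x\<in>{a..b}. \<forall>t\<in>{c..d}. \<bar>h x t\<bar> \<le> M"
proof -
  have "compact ((\<lambda>p. h (fst p) (snd p)) ` ({a..b} \<times> {c..d}))"
    by (rule compact_continuous_image[OF continuous_on_subset[OF assms] compact_Times[OF compact_Icc compact_Icc]]) auto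
  then have "bounded ((\<lambda>p. h (fst p) (snd p)) ` ({a..b} \<times> {c..d}))" by (rule compact_imp_bounded)
  then obtain M where "\<forall>y\<in>(\<lambda>p. h (fst p) (snd p)) ` ({a..b} \<times> {c..d}). norm y \<le> M"
    unfolding bounded_iff by blast
  then show ?thesis by force
qed

lemma ae_lift:
  fixes g :: "real \<Rightarrow> real"
  assumes mg: "g \<in> borel_measurable lborel" and ae: "AE x in lborel. \<bar>g x\<bar> \<le> K"
  shows "AE (q::real \<times> real \<times> real) in lborel. \<bar>g (fst (snd q))\<bar> \<le> K"
proof -
  let ?N = "{x. \<not> \<bar>g x\<bar> \<le> K}"
  have gb: "g \<in> borel_measurable borel" using mg by simp
  have Nb: "?N \<in> sets borel"
  proof -
    have "?N = {x \<in> space borel. \<not> \<bar>g x\<bar> \<le> K}" by simp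
    also have "\<dots> \<in> sets borel" using gb by measurable
    finally show ?thesis .
  qed
  have N0: "emeasure lborel ?N = 0"
    using ae Nb by (subst (asm) AE_iff_measurable[OF _ refl]) auto
  have eq: "{q \<in> space lborel. \<not> \<bar>g (fst (snd q))\<bar> \<le> K} = (UNIV :: real set) \<times> ?N \<times> (UNIV :: real set)"
    by auto
  have sets: "(UNIV :: real set) \<times> ?N \<times> (UNIV :: real set) \<in> sets (lborel :: (real \<times> real \<times> real) measure)"
  proof -
    have "(UNIV :: real set) \<times> ?N \<times> (UNIV :: real set) \<in> sets (borel \<Otimes>\<^sub>M (borel \<Otimes>\<^sub>M borel))"
      using Nb by (intro pair_measureI) auto
    moreover have "(borel \<Otimes>\<^sub>M (borel \<Otimes>\<^sub>M borel)) = (borel :: (real \<times> real \<times> real) measure)"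
      by (simp only: borel_prod)
    ultimately show ?thesis by (metis sets_lborel)
  qed
  have "emeasure lborel ((UNIV :: real set) \<times> ?N \<times> (UNIV :: real set)) = 0"
    using Nb by (simp add: emeasure_lborel_triple N0)
  then show ?thesis
    by (subst AE_iff_measurable[OF sets eq]) simp
qed

theorem mainTheorem3:
  fixes xl xr T :: real
    and u0 ul ur f z dz b :: "real \<Rightarrow> real"
    and \<mu> :: "real \<Rightarrow> real \<Rightarrow> real \<Rightarrow> real"
    and k :: real and pm :: bool
    and \<phi> :: "real \<Rightarrow> real \<Rightarrow> real"
  assumes "xl < xr" and "T > 0"
    and "Linf_on {xl<..<xr} u0" and "Linf_on {0<..<T} ul" and "Linf_on {0<..<T} ur"
    and "C2_fun f"
    and "W1inf_with_deriv xl xr z dz"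
    and "C1_fun b" and "bounded (range (deriv b))"
    and "C1_fun (D_fun f b)"
    and "surj (D_fun f b)"
    and "\<exists>c>0. \<forall>s. c \<le> deriv (D_fun f b) s"
    and "entropy_process_solution xl xr T u0 ul ur f dz b \<mu>"
    and "test_fun xl xr T \<phi>"
  shows "let C = Linf_norm ({xl<..<xr} \<times> {0<..<T} \<times> {0<..<1})
                   (\<lambda>p. \<mu> (fst p) (fst (snd p)) (snd (snd p)))
         in (LINT t:{0<..<T}|lborel. LINT x:{xl<..<xr}|lborel. LINT \<alpha>:{0<..<1}|lborel.
                eta_k pm k (\<mu> x t \<alpha>) * dt \<phi> x t + q_k f pm k (\<mu> x t \<alpha>) * dx \<phi> x t)
          - (LINT t:{0<..<T}|lborel. LINT x:{xl<..<xr}|lborel. LINT \<alpha>:{0<..<1}|lborel.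
                sign_pm pm (\<mu> x t \<alpha> - k) * dz x * b (\<mu> x t \<alpha>) * \<phi> x t)
          + (LINT x:{xl<..<xr}|lborel. eta_k pm k (u0 x) * \<phi> x 0)
          + Lip_on C f * (LINT t:{0<..<T}|lborel.
                eta_k pm k (ur t) * \<phi> xr t + eta_k pm k (ul t) * \<phi> xl t)
          \<ge> 0"
proof -
  note xlr = assms(1) and T0 = assms(2)
  define S3 where "S3 = {xl<..<xr} \<times> {0<..<T} \<times> {0<..<(1::real)}"
  define \<mu>3 where "\<mu>3 = (\<lambda>p. \<mu> (fst p) (fst (snd p)) (snd (snd p)))"
  define C where "C = Linf_norm S3 \<mu>3"
  define L where "L = Lip_on C f"
  have EPS: "Linf_on S3 \<mu>3" and hyp: "\<And>\<eta> q. boundary_entropy_pair f \<eta> q \<Longrightarrow>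
        (LINT t:{0<..<T}|lborel. LINT x:{xl<..<xr}|lborel. LINT \<alpha>:{0<..<1}|lborel.
            \<eta> (\<mu> x t \<alpha>) * dt \<phi> x t + q (\<mu> x t \<alpha>) * dx \<phi> x t
            - deriv \<eta> (\<mu> x t \<alpha>) * dz x * b (\<mu> x t \<alpha>) * \<phi> x t)
        + (LINT x:{xl<..<xr}|lborel. \<eta> (u0 x) * \<phi> x 0)
        + L * (LINT t:{0<..<T}|lborel. \<eta> (ur t) * \<phi> xr t + \<eta> (ul t) * \<phi> xl t)
        \<ge> 0"
    using assms(13) assms(14) unfolding entropy_process_solution_def Let_def S3_def \<mu>3_def C_def L_def
    by auto
  have df: "\<forall>x. f differentiable (at x)" and dfd: "\<forall>x. deriv f differentiable (at x)"
    using assms(6) by (auto simp: C2_fun_def C1_fun_def)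
  have cf: "continuous_on UNIV (deriv f)"
    using dfd by (intro differentiable_imp_continuous_on differentiable_at_imp_differentiable_on) auto
  have cf0: "continuous_on UNIV f"
    using df by (intro differentiable_imp_continuous_on differentiable_at_imp_differentiable_on) auto
  have cb: "continuous_on UNIV b"
    using assms(8) by (intro differentiable_imp_continuous_on differentiable_at_imp_differentiable_on) (auto simp: C1_fun_def)
  have sm: "smooth2 \<phi>" using assms(14) by (simp add: test_fun_def)
  have c0: "continuous_on UNIV (\<lambda>p. \<phi> (fst p) (snd p))"
    using sm unfolding smooth2_def by (metis pderivs.simps(1))
  have ct: "continuous_on UNIV (\<lambda>p. dt \<phi> (fst p) (snd p))"
    using sm unfolding smooth2_def by (metis pderivs.simps(1,3))
  have cx: "continuous_on UNIV (\<lambda>p. dx \<phi> (fst p) (snd p))"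
    using sm unfolding smooth2_def by (metis pderivs.simps(1,2))
  obtain B0 where B0: "\<forall>x\<in>{xl..xr}. \<forall>t\<in>{0..T}. \<bar>\<phi> x t\<bar> \<le> B0" using cont2_bound[OF c0] by blast
  obtain Bt where Bt: "\<forall>x\<in>{xl..xr}. \<forall>t\<in>{0..T}. \<bar>dt \<phi> x t\<bar> \<le> Bt" using cont2_bound[OF ct] by blast
  obtain Bx where Bx: "\<forall>x\<in>{xl..xr}. \<forall>t\<in>{0..T}. \<bar>dx \<phi> x t\<bar> \<le> Bx" using cont2_bound[OF cx] by blast
  define Pb where "Pb = max B0 (max Bt Bx)"
  have Pb: "\<And>x t. x \<in> {xl..xr} \<Longrightarrow> t \<in> {0..T} \<Longrightarrow> \<bar>\<phi> x t\<bar> \<le> Pb \<and> \<bar>dt \<phi> x t\<bar> \<le> Pb \<and> \<bar>dx \<phi> x t\<bar> \<le> Pb"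
  proof -
    fix x t assume "x \<in> {xl..xr}" "t \<in> {0..T}"
    then have "\<bar>\<phi> x t\<bar> \<le> B0" "\<bar>dt \<phi> x t\<bar> \<le> Bt" "\<bar>dx \<phi> x t\<bar> \<le> Bx" using B0 Bt Bx by blast+
    then show "\<bar>\<phi> x t\<bar> \<le> Pb \<and> \<bar>dt \<phi> x t\<bar> \<le> Pb \<and> \<bar>dx \<phi> x t\<bar> \<le> Pb" unfolding Pb_def by linarith
  qed

  define S' where "S' = {0<..<T} \<times> {xl<..<xr} \<times> {0<..<(1::real)}"
  define nr where "nr = (\<lambda>q::real\<times>real\<times>real. indicator S' q * \<mu> (fst (snd q)) (fst q) (snd (snd q)))"
  define h where "h = (\<lambda>p. indicator S3 p *\<^sub>R \<mu>3 p)"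
  obtain c where c: "AE p in lborel. p \<in> S3 \<longrightarrow> \<bar>\<mu>3 p\<bar> \<le> c" and mh: "h \<in> borel_measurable lborel"
    using EPS unfolding Linf_on_def set_borel_measurable_def h_def by blast
  define c' where "c' = max c 0"
  have c'0: "0 \<le> c'" by (simp add: c'_def)
  have hperm: "h (perm3 q) = nr q" for q
    by (cases q) (auto simp: h_def nr_def perm3_def S3_def S'_def \<mu>3_def indicator_def)
  have hb: "h \<in> borel_measurable borel" using mh by simp
  have mnr: "nr \<in> borel_measurable lborel"
  proof -
    have "(\<lambda>q. h (perm3 q)) \<in> borel_measurable borel"
      by (rule measurable_compose[OF perm3_measurable hb])
    then show ?thesis by (simp add: hperm)
  qed
  have aeh: "AE p in lborel. \<bar>h p\<bar> \<le> c'"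
    using c by eventually_elim (auto simp: h_def c'_def indicator_def)
  have aenr: "AE q in lborel. \<bar>nr q\<bar> \<le> c'"
  proof -
    have "AE p in distr lborel lborel perm3. \<bar>h p\<bar> \<le> c'" using aeh by (simp only: distr_perm3)
    moreover have "{p \<in> space lborel. \<bar>h p\<bar> \<le> c'} \<in> sets lborel"
      using mh by measurable
    ultimately have "AE q in lborel. \<bar>h (perm3 q)\<bar> \<le> c'"
      by (subst (asm) AE_distr_iff) auto
    then show ?thesis by (simp add: hperm)
  qed
  have Ldz: "Linf_on {xl<..<xr} dz" using assms(7) by (simp add: W1inf_with_deriv_def)
  define dzr where "dzr = (\<lambda>x. indicator {xl<..<xr} x * dz x)"
  obtain cz where cz: "AE x in lborel. x \<in> {xl<..<xr} \<longrightarrow> \<bar>dz x\<bar> \<le> cz" and mdz: "dzr \<in> borel_measurable lborel"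
    using Ldz unfolding Linf_on_def set_borel_measurable_def dzr_def by auto
  define cz' where "cz' = max cz 0"
  have aedz1: "AE x in lborel. \<bar>dzr x\<bar> \<le> cz'"
    using cz by eventually_elim (auto simp: dzr_def cz'_def indicator_def)
  have aedz: "AE (q::real\<times>real\<times>real) in lborel. \<bar>dzr (fst (snd q))\<bar> \<le> cz'"
    by (rule ae_lift[OF mdz aedz1])

  define R where "R = c' + \<bar>k\<bar>"
  have R0: "0 \<le> R" using c'0 by (simp add: R_def)
  obtain Mf0 where Mf0: "\<forall>x\<in>{-R..R}. \<bar>deriv f x\<bar> \<le> Mf0"
    using cont_bound[OF continuous_on_subset[OF cf]] by blast
  define Mf where "Mf = max Mf0 0"
  have Mf: "\<And>x. x \<in> {-R..R} \<Longrightarrow> \<bar>deriv f x\<bar> \<le> Mf" and Mf_0: "0 \<le> Mf"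
    using Mf0 unfolding Mf_def by force+
  obtain Kb where Kb: "\<forall>x\<in>{-c'..c'}. \<bar>b x\<bar> \<le> Kb"
    using cont_bound[OF continuous_on_subset[OF cb]] by blast
  have seg: "\<And>r v. \<bar>v\<bar> \<le> c' \<Longrightarrow> min k v \<le> r \<Longrightarrow> r \<le> max k v \<Longrightarrow> \<bar>deriv f r\<bar> \<le> Mf"
    by (rule Mf) (auto simp: R_def)
  have vk: "\<And>v. \<bar>v\<bar> \<le> c' \<Longrightarrow> \<bar>v - k\<bar> \<le> R" by (auto simp: R_def)
  have bE: "\<And>n v. \<bar>v\<bar> \<le> c' \<Longrightarrow> \<bar>etaN pm k n v\<bar> \<le> R"
    using etaN_bound vk order_trans by blast
  have bQ: "\<bar>qN f pm k n v\<bar> \<le> Mf * R" if "\<bar>v\<bar> \<le> c'" for n v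
  proof -
    have "\<bar>qN f pm k n v\<bar> \<le> Mf * \<bar>v - k\<bar>" by (rule qN_bound[OF cf seg[OF that]])
    also have "\<dots> \<le> Mf * R" using vk[OF that] Mf_0 by (rule mult_left_mono)
    finally show ?thesis .
  qed
  have bEi: "\<bar>eta_k pm k v\<bar> \<le> R" if "\<bar>v\<bar> \<le> c'" for v
  proof -
    have "\<bar>eta_k pm k v\<bar> \<le> \<bar>v - k\<bar>" by (auto simp: eta_k_alt sg_def)
    then show ?thesis using vk[OF that] by linarith
  qed
  have bSg: "\<bar>sign_pm pm (v - k)\<bar> \<le> 1" for v by (simp add: sign_pm_alt)
  have bQi: "\<bar>q_k f pm k v\<bar> \<le> Mf * R" if "\<bar>v\<bar> \<le> c'" for v
  proof -
    have "\<bar>f v - f k\<bar> \<le> Mf * \<bar>v - k\<bar>"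
      by (rule mvt_bound[OF DERIV_f[OF df]]) (rule seg[OF that])
    also have "\<dots> \<le> Mf * R" using vk[OF that] Mf_0 by (rule mult_left_mono)
    finally have "\<bar>f v - f k\<bar> \<le> Mf * R" .
    moreover have "\<bar>q_k f pm k v\<bar> \<le> 1 * \<bar>f v - f k\<bar>"
      unfolding q_k_def abs_mult using bSg[of v] by (intro mult_right_mono) auto
    ultimately show ?thesis by (metis mult_1 order_trans)
  qed
  have cE: "continuous_on UNIV (etaN pm k n)" for n
    by (rule DERIV_continuous_on) (rule has_field_derivative_at_within[OF DERIV_etaN])
  have cQ: "continuous_on UNIV (qN f pm k n)" for n
    by (rule DERIV_continuous_on) (rule has_field_derivative_at_within[OF DERIV_qN[OF cf]])
  have cEi: "continuous_on UNIV (eta_k pm k)"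
    unfolding eta_k_alt[abs_def] by (intro continuous_intros)
  have cswap: "continuous_on UNIV (\<lambda>q::real\<times>real\<times>real. (fst (snd q), fst q))"
    by (intro continuous_intros)
  have cPt: "continuous_on UNIV (\<lambda>q::real\<times>real\<times>real. dt \<phi> (fst (snd q)) (fst q))"
    using continuous_on_compose2[OF ct cswap] by simp
  have cPx: "continuous_on UNIV (\<lambda>q::real\<times>real\<times>real. dx \<phi> (fst (snd q)) (fst q))"
    using continuous_on_compose2[OF cx cswap] by simp
  have cP0: "continuous_on UNIV (\<lambda>q::real\<times>real\<times>real. \<phi> (fst (snd q)) (fst q))"
    using continuous_on_compose2[OF c0 cswap] by simp
  have mEi: "(\<lambda>q. eta_k pm k (nr q)) \<in> borel_measurable lborel"
    using mnr cEi by (auto intro: borel_measurable_continuous_on)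
  have mSg: "(\<lambda>q. sign_pm pm (nr q - k)) \<in> borel_measurable lborel"
  proof -
    note mnr[measurable]
    have "(\<lambda>q. if 0 < sg pm * (nr q - k) then sg pm else 0) \<in> borel_measurable lborel"
      by measurable
    then show ?thesis by (simp add: sign_pm_alt)
  qed
  have mQi: "(\<lambda>q. q_k f pm k (nr q)) \<in> borel_measurable lborel"
  proof -
    have "(\<lambda>q. f (nr q)) \<in> borel_measurable lborel" using mnr cf0 by (auto intro: borel_measurable_continuous_on)
    then have "(\<lambda>q. sign_pm pm (nr q - k) * (f (nr q) - f k)) \<in> borel_measurable lborel"
      using mSg by (intro borel_measurable_times borel_measurable_diff) auto
    then show ?thesis by (simp add: q_k_def)
  qed
  have S'sets: "S' \<in> sets lborel"
    unfolding S'_def by (simp add: open_Times)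
  have S'fin: "emeasure lborel S' < \<infinity>"
    unfolding S'_def using xlr T0 by (simp add: emeasure_lborel_triple ennreal_mult_less_top)
  have bP: "\<bar>dt \<phi> (fst (snd q)) (fst q)\<bar> \<le> Pb \<and> \<bar>dx \<phi> (fst (snd q)) (fst q)\<bar> \<le> Pb \<and> \<bar>\<phi> (fst (snd q)) (fst q)\<bar> \<le> Pb"
    if "q \<in> S'" for q
    using Pb[of "fst (snd q)" "fst q"] that by (auto simp: S'_def)
  have kbb: "\<And>v. \<bar>v\<bar> \<le> c' \<Longrightarrow> \<bar>b v\<bar> \<le> Kb" using Kb by (auto simp: abs_le_iff)
  note TR = triple_dct[where E="etaN pm k" and Q="qN f pm k" and E'="etaN' pm k" and Ei="eta_k pm k"
      and Qi="q_k f pm k" and Sg="\<lambda>v. sign_pm pm (v - k)" and b=b and dzr=dzr and nr=nr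
      and Pt="\<lambda>q. dt \<phi> (fst (snd q)) (fst q)" and Px="\<lambda>q. dx \<phi> (fst (snd q)) (fst q)"
      and Pz="\<lambda>q. \<phi> (fst (snd q)) (fst q)" and S=S' and c=c' and ?K1.0=R and ?K2.0="Mf * R" and Kb=Kb
      and cz=cz' and Pb=Pb,
      OF S'sets S'fin mnr mdz cPt cPx cP0 cE cQ etaN'_cont cb mEi mQi mSg etaN_lim qN_lim[OF df cf]
      etaN'_lim bE bQ etaN'_bound _ bEi bQi bSg aenr aedz bP]
  have TR1: "(\<lambda>n. integral\<^sup>L lborel (\<lambda>q. indicator S' q * (etaN pm k n (nr q) * dt \<phi> (fst (snd q)) (fst q)
        + qN f pm k n (nr q) * dx \<phi> (fst (snd q)) (fst q)
        - etaN' pm k n (nr q) * dzr (fst (snd q)) * b (nr q) * \<phi> (fst (snd q)) (fst q))))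
     \<longlonglongrightarrow> integral\<^sup>L lborel (\<lambda>q. indicator S' q * (eta_k pm k (nr q) * dt \<phi> (fst (snd q)) (fst q)
        + q_k f pm k (nr q) * dx \<phi> (fst (snd q)) (fst q)))
       - integral\<^sup>L lborel (\<lambda>q. indicator S' q * (sign_pm pm (nr q - k) * dzr (fst (snd q)) * b (nr q)
        * \<phi> (fst (snd q)) (fst q)))"
    and TR2: "\<And>n. integrable lborel (\<lambda>q. indicator S' q * (etaN pm k n (nr q) * dt \<phi> (fst (snd q)) (fst q)
        + qN f pm k n (nr q) * dx \<phi> (fst (snd q)) (fst q)
        - etaN' pm k n (nr q) * dzr (fst (snd q)) * b (nr q) * \<phi> (fst (snd q)) (fst q)))"
    and TR3: "integrable lborel (\<lambda>q. indicator S' q * (eta_k pm k (nr q) * dt \<phi> (fst (snd q)) (fst q)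
        + q_k f pm k (nr q) * dx \<phi> (fst (snd q)) (fst q)))"
    and TR4: "integrable lborel (\<lambda>q. indicator S' q * (sign_pm pm (nr q - k) * dzr (fst (snd q)) * b (nr q)
        * \<phi> (fst (snd q)) (fst q)))"
    using TR[OF _ _ kbb] by auto

  have eqn: "ind3 {0<..<T} {xl<..<xr} {0<..<1} (\<lambda>x t \<alpha>. etaN pm k n (\<mu> x t \<alpha>) * dt \<phi> x t
        + qN f pm k n (\<mu> x t \<alpha>) * dx \<phi> x t - etaN' pm k n (\<mu> x t \<alpha>) * dz x * b (\<mu> x t \<alpha>) * \<phi> x t)
      = (\<lambda>q. indicator S' q * (etaN pm k n (nr q) * dt \<phi> (fst (snd q)) (fst q)
        + qN f pm k n (nr q) * dx \<phi> (fst (snd q)) (fst q)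
        - etaN' pm k n (nr q) * dzr (fst (snd q)) * b (nr q) * \<phi> (fst (snd q)) (fst q)))" for n
    by (rule ext, case_tac q) (auto simp: ind3_def S'_def nr_def dzr_def indicator_def)
  have eqA: "ind3 {0<..<T} {xl<..<xr} {0<..<1} (\<lambda>x t \<alpha>. eta_k pm k (\<mu> x t \<alpha>) * dt \<phi> x t
        + q_k f pm k (\<mu> x t \<alpha>) * dx \<phi> x t)
      = (\<lambda>q. indicator S' q * (eta_k pm k (nr q) * dt \<phi> (fst (snd q)) (fst q)
        + q_k f pm k (nr q) * dx \<phi> (fst (snd q)) (fst q)))"
    by (rule ext, case_tac q) (auto simp: ind3_def S'_def nr_def dzr_def indicator_def)
  have eqS: "ind3 {0<..<T} {xl<..<xr} {0<..<1} (\<lambda>x t \<alpha>. sign_pm pm (\<mu> x t \<alpha> - k) * dz x * b (\<mu> x t \<alpha>) * \<phi> x t)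
      = (\<lambda>q. indicator S' q * (sign_pm pm (nr q - k) * dzr (fst (snd q)) * b (nr q)
        * \<phi> (fst (snd q)) (fst q)))"
    by (rule ext, case_tac q) (auto simp: ind3_def S'_def nr_def dzr_def indicator_def)
  have Nn: "(LINT t:{0<..<T}|lborel. LINT x:{xl<..<xr}|lborel. LINT \<alpha>:{0<..<1}|lborel.
            etaN pm k n (\<mu> x t \<alpha>) * dt \<phi> x t + qN f pm k n (\<mu> x t \<alpha>) * dx \<phi> x t
            - etaN' pm k n (\<mu> x t \<alpha>) * dz x * b (\<mu> x t \<alpha>) * \<phi> x t)
      = integral\<^sup>L lborel (\<lambda>q. indicator S' q * (etaN pm k n (nr q) * dt \<phi> (fst (snd q)) (fst q)
        + qN f pm k n (nr q) * dx \<phi> (fst (snd q)) (fst q)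
        - etaN' pm k n (nr q) * dzr (fst (snd q)) * b (nr q) * \<phi> (fst (snd q)) (fst q)))" for n
  proof -
    have i: "integrable lborel (ind3 {0<..<T} {xl<..<xr} {0<..<1} (\<lambda>x t \<alpha>. etaN pm k n (\<mu> x t \<alpha>) * dt \<phi> x t
        + qN f pm k n (\<mu> x t \<alpha>) * dx \<phi> x t - etaN' pm k n (\<mu> x t \<alpha>) * dz x * b (\<mu> x t \<alpha>) * \<phi> x t))"
      by (subst eqn) (rule TR2)
    from nest[OF i] show ?thesis by (simp only: eqn)
  qed
  have NA: "(LINT t:{0<..<T}|lborel. LINT x:{xl<..<xr}|lborel. LINT \<alpha>:{0<..<1}|lborel.
                eta_k pm k (\<mu> x t \<alpha>) * dt \<phi> x t + q_k f pm k (\<mu> x t \<alpha>) * dx \<phi> x t)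
      = integral\<^sup>L lborel (\<lambda>q. indicator S' q * (eta_k pm k (nr q) * dt \<phi> (fst (snd q)) (fst q)
        + q_k f pm k (nr q) * dx \<phi> (fst (snd q)) (fst q)))"
  proof -
    have i: "integrable lborel (ind3 {0<..<T} {xl<..<xr} {0<..<1} (\<lambda>x t \<alpha>. eta_k pm k (\<mu> x t \<alpha>) * dt \<phi> x t
        + q_k f pm k (\<mu> x t \<alpha>) * dx \<phi> x t))"
      by (subst eqA) (rule TR3)
    from nest[OF i] show ?thesis by (simp only: eqA)
  qed
  have NS: "(LINT t:{0<..<T}|lborel. LINT x:{xl<..<xr}|lborel. LINT \<alpha>:{0<..<1}|lborel.
                sign_pm pm (\<mu> x t \<alpha> - k) * dz x * b (\<mu> x t \<alpha>) * \<phi> x t)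
      = integral\<^sup>L lborel (\<lambda>q. indicator S' q * (sign_pm pm (nr q - k) * dzr (fst (snd q)) * b (nr q)
        * \<phi> (fst (snd q)) (fst q)))"
  proof -
    have i: "integrable lborel (ind3 {0<..<T} {xl<..<xr} {0<..<1} (\<lambda>x t \<alpha>. sign_pm pm (\<mu> x t \<alpha> - k) * dz x * b (\<mu> x t \<alpha>) * \<phi> x t))"
      by (subst eqS) (rule TR4)
    from nest[OF i] show ?thesis by (simp only: eqS)
  qed

  have Pb0: "0 \<le> Pb" using Pb[of xl 0] xlr T0 by auto
  have ebnd: "\<bar>etaN pm k n v\<bar> \<le> cc + \<bar>k\<bar>" if "\<bar>v\<bar> \<le> cc" for n v cc
    using etaN_bound[of pm k n v] that by linarith
  have cu0: "continuous_on UNIV (\<lambda>x. \<phi> x 0)"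
  proof -
    have "continuous_on UNIV (\<lambda>x::real. (x, 0))" by (intro continuous_intros)
    from continuous_on_compose2[OF c0 this] show ?thesis by simp
  qed
  have cur: "continuous_on UNIV (\<lambda>t. \<phi> xr t)"
  proof -
    have "continuous_on UNIV (\<lambda>t::real. (xr, t))" by (intro continuous_intros)
    from continuous_on_compose2[OF c0 this] show ?thesis by simp
  qed
  have cul: "continuous_on UNIV (\<lambda>t. \<phi> xl t)"
  proof -
    have "continuous_on UNIV (\<lambda>t::real. (xl, t))" by (intro continuous_intros)
    from continuous_on_compose2[OF c0 this] show ?thesis by simp
  qed
  obtain c0 where mu0: "set_borel_measurable lborel {xl<..<xr} u0"
      and c0: "AE x in lborel. x \<in> {xl<..<xr} \<longrightarrow> \<bar>u0 x\<bar> \<le> c0"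
    using assms(3) unfolding Linf_on_def by blast
  obtain cl where mul: "set_borel_measurable lborel {0<..<T} ul"
      and cl: "AE x in lborel. x \<in> {0<..<T} \<longrightarrow> \<bar>ul x\<bar> \<le> cl"
    using assms(4) unfolding Linf_on_def by blast
  obtain cr where mur: "set_borel_measurable lborel {0<..<T} ur"
      and cr: "AE x in lborel. x \<in> {0<..<T} \<longrightarrow> \<bar>ur x\<bar> \<le> cr"
    using assms(5) unfolding Linf_on_def by blast
  have clr: "AE x in lborel. x \<in> {0<..<T} \<longrightarrow> \<bar>ul x\<bar> \<le> max cr cl"
    using cl by eventually_elim auto
  have crr: "AE x in lborel. x \<in> {0<..<T} \<longrightarrow> \<bar>ur x\<bar> \<le> max cr cl"
    using cr by eventually_elim auto
  have B0lim0: "(\<lambda>n. LINT x:{xl<..<xr}|lborel. etaN pm k n (u0 x) * \<phi> x 0 + etaN pm k n (u0 x) * 0)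
      \<longlonglongrightarrow> (LINT x:{xl<..<xr}|lborel. eta_k pm k (u0 x) * \<phi> x 0 + eta_k pm k (u0 x) * 0)"
  proof (rule single_dct[where c=c0 and K="c0 + \<bar>k\<bar>" and Pb=Pb])
    show "\<bar>\<phi> x 0\<bar> \<le> Pb \<and> \<bar>0::real\<bar> \<le> Pb" if "x \<in> {xl<..<xr}" for x
      using Pb[of x 0] that T0 Pb0 by auto
  qed (use c0 xlr in \<open>auto simp: mu0 cu0 cE cEi etaN_lim ebnd\<close>)
  then have B0lim: "(\<lambda>n. LINT x:{xl<..<xr}|lborel. etaN pm k n (u0 x) * \<phi> x 0)
      \<longlonglongrightarrow> (LINT x:{xl<..<xr}|lborel. eta_k pm k (u0 x) * \<phi> x 0)"
    by simp
  have Bdlim: "(\<lambda>n. LINT t:{0<..<T}|lborel. etaN pm k n (ur t) * \<phi> xr t + etaN pm k n (ul t) * \<phi> xl t)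
      \<longlonglongrightarrow> (LINT t:{0<..<T}|lborel. eta_k pm k (ur t) * \<phi> xr t + eta_k pm k (ul t) * \<phi> xl t)"
  proof (rule single_dct[where c="max cr cl" and K="max cr cl + \<bar>k\<bar>" and Pb=Pb])
    show "\<bar>\<phi> xr t\<bar> \<le> Pb \<and> \<bar>\<phi> xl t\<bar> \<le> Pb" if "t \<in> {0<..<T}" for t
      using Pb[of xr t] Pb[of xl t] that xlr by auto
  qed (use crr clr T0 in \<open>auto simp: mur mul cur cul cE cEi etaN_lim ebnd\<close>)
  have H: "0 \<le> (LINT t:{0<..<T}|lborel. LINT x:{xl<..<xr}|lborel. LINT \<alpha>:{0<..<1}|lborel.
            etaN pm k n (\<mu> x t \<alpha>) * dt \<phi> x t + qN f pm k n (\<mu> x t \<alpha>) * dx \<phi> x t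
            - etaN' pm k n (\<mu> x t \<alpha>) * dz x * b (\<mu> x t \<alpha>) * \<phi> x t)
        + (LINT x:{xl<..<xr}|lborel. etaN pm k n (u0 x) * \<phi> x 0)
        + L * (LINT t:{0<..<T}|lborel. etaN pm k n (ur t) * \<phi> xr t + etaN pm k n (ul t) * \<phi> xl t)" for n
    using hyp[OF entropy_pair_N[OF cf, of pm k n]] by (simp only: deriv_etaN)
  have lim: "(\<lambda>n. (LINT t:{0<..<T}|lborel. LINT x:{xl<..<xr}|lborel. LINT \<alpha>:{0<..<1}|lborel.
            etaN pm k n (\<mu> x t \<alpha>) * dt \<phi> x t + qN f pm k n (\<mu> x t \<alpha>) * dx \<phi> x t
            - etaN' pm k n (\<mu> x t \<alpha>) * dz x * b (\<mu> x t \<alpha>) * \<phi> x t)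
        + (LINT x:{xl<..<xr}|lborel. etaN pm k n (u0 x) * \<phi> x 0)
        + L * (LINT t:{0<..<T}|lborel. etaN pm k n (ur t) * \<phi> xr t + etaN pm k n (ul t) * \<phi> xl t))
      \<longlonglongrightarrow> (LINT t:{0<..<T}|lborel. LINT x:{xl<..<xr}|lborel. LINT \<alpha>:{0<..<1}|lborel.
                eta_k pm k (\<mu> x t \<alpha>) * dt \<phi> x t + q_k f pm k (\<mu> x t \<alpha>) * dx \<phi> x t)
          - (LINT t:{0<..<T}|lborel. LINT x:{xl<..<xr}|lborel. LINT \<alpha>:{0<..<1}|lborel.
                sign_pm pm (\<mu> x t \<alpha> - k) * dz x * b (\<mu> x t \<alpha>) * \<phi> x t)
          + (LINT x:{xl<..<xr}|lborel. eta_k pm k (u0 x) * \<phi> x 0)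
          + L * (LINT t:{0<..<T}|lborel.
                eta_k pm k (ur t) * \<phi> xr t + eta_k pm k (ul t) * \<phi> xl t)"
    unfolding Nn NA NS by (intro tendsto_add tendsto_mult_left TR1 B0lim Bdlim)
  have "0 \<le> (LINT t:{0<..<T}|lborel. LINT x:{xl<..<xr}|lborel. LINT \<alpha>:{0<..<1}|lborel.
                eta_k pm k (\<mu> x t \<alpha>) * dt \<phi> x t + q_k f pm k (\<mu> x t \<alpha>) * dx \<phi> x t)
          - (LINT t:{0<..<T}|lborel. LINT x:{xl<..<xr}|lborel. LINT \<alpha>:{0<..<1}|lborel.
                sign_pm pm (\<mu> x t \<alpha> - k) * dz x * b (\<mu> x t \<alpha>) * \<phi> x t)
          + (LINT x:{xl<..<xr}|lborel. eta_k pm k (u0 x) * \<phi> x 0)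
          + L * (LINT t:{0<..<T}|lborel.
                eta_k pm k (ur t) * \<phi> xr t + eta_k pm k (ul t) * \<phi> xl t)"
    by (rule LIMSEQ_le_const[OF lim]) (use H in blast)
  then show ?thesis unfolding Let_def L_def C_def S3_def \<mu>3_def by simp
qed

end
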